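(* Let $f = c_1 \wedge c_2 \wedge \cdots \wedge c_m$ ($m \ge 1$) be a Boolean formula in conjunctive normal form, where each clause is $c_i = L_{i1} \vee L_{i2} \vee \cdots \vee L_{i n_i}$ with $n_i \ge 1$ and each $L_{i\mu}$ a literal (a propositional variable or its negation). Introduce one new Boolean variable (an "indicator") $\xi_{i\mu}$ for each position $(i,\mu)$, $1 \le i \le m$, $1 \le \mu \le n_i$. Define $$g = \bigwedge_{i=1}^{m} \left(\xi_{i1} \oplus \xi_{i2} \oplus \cdots \oplus \xi_{i n_i}\right),$$ where $\oplus$ denotes exclusive or. For $1 \le i < j \le m$ let $$B_{ij} = \{ (\xi_{i\mu}, \xi_{j\nu}) : 1 \le \mu \le n_i,\ 1 \le \nu \le n_j,\ L_{i\mu} = \overline{L_{j\nu}} \},$$ i.e. the pairs of indicators of positions in two distinct clauses carrying complementary literals, and define $$h = \bigwedge_{1 \le i < j \le m} \ \bigwedge_{(\xi,\zeta) \in B_{ij}} (\bar{\xi} \vee \bar{\zeta})$$ (an empty conjunction being $\mathit{true}$). Then $f$ is satisfiable (by some assignment of its original variables) if and only if $g \wedge h$ is satisfiable (by some assignment of the indicator variables $\xi_{i\mu}$).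
   Context: Literals $L$ and $\overline{L}$ denote a variable and its negation (in either order). The formula $g \wedge h$ is a formula solely in the indicator variables $\xi_{i\mu}$; the original variables of $f$ do not occur in it. A multi-argument exclusive or $\xi_{i1} \oplus \cdots \oplus \xi_{in_i}$ is true exactly when an odd number of its arguments are true. *)

theory Defs
  imports Main
begin

text \<open>A literal is a pair (variable, polarity): (x, True) is x, (x, False) is its negation.
Positions are 0-indexed.\<close>

type_synonym 'v literal = "'v \<times> bool"
type_synonym 'v clause = "'v literal list"
type_synonym 'v cnf = "'v clause list"

definition complement :: "'v literal \<Rightarrow> 'v literal" where
  "complement L = (fst L, \<not> snd L)"

definition lit_val :: "('v \<Rightarrow> bool) \<Rightarrow> 'v literal \<Rightarrow> bool" where
  "lit_val a L = (a (fst L) = snd L)"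

definition cnf_val :: "('v \<Rightarrow> bool) \<Rightarrow> 'v cnf \<Rightarrow> bool" where
  "cnf_val a F = (\<forall>c \<in> set F. \<exists>L \<in> set c. lit_val a L)"

definition cnf_satisfiable :: "'v cnf \<Rightarrow> bool" where
  "cnf_satisfiable F = (\<exists>a. cnf_val a F)"

definition xor_list :: "bool list \<Rightarrow> bool" where
  "xor_list bs = odd (length (filter id bs))"

text \<open>Indicator assignments: \<xi> i \<mu> is the value of the indicator of position (i, \<mu>).\<close>

definition g_val :: "'v cnf \<Rightarrow> (nat \<Rightarrow> nat \<Rightarrow> bool) \<Rightarrow> bool" where
  "g_val F \<xi> = (\<forall>i < length F. xor_list (map (\<xi> i) [0..<length (F ! i)]))"

definition B :: "'v cnf \<Rightarrow> nat \<Rightarrow> nat \<Rightarrow> ((nat \<times> nat) \<times> (nat \<times> nat)) set" where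
  "B F i j = {((i, \<mu>), (j, \<nu>)) | \<mu> \<nu>. \<mu> < length (F ! i) \<and> \<nu> < length (F ! j) \<and>
                 F ! i ! \<mu> = complement (F ! j ! \<nu>)}"

definition h_val :: "'v cnf \<Rightarrow> (nat \<Rightarrow> nat \<Rightarrow> bool) \<Rightarrow> bool" where
  "h_val F \<xi> = (\<forall>i j. i < j \<and> j < length F \<longrightarrow>
      (\<forall>((i', \<mu>), (j', \<nu>)) \<in> B F i j. \<not> \<xi> i' \<mu> \<or> \<not> \<xi> j' \<nu>))"

definition gh_satisfiable :: "'v cnf \<Rightarrow> bool" where
  "gh_satisfiable F = (\<exists>\<xi>. g_val F \<xi> \<and> h_val F \<xi>)"

end

theory Submission
  imports Defs
begin

lemma xor_ex: "xor_list (map \<xi> [0..<n]) \<Longrightarrow> \<exists>\<mu><n. \<xi> \<mu>"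
proof (rule ccontr)
  assume "xor_list (map \<xi> [0..<n])" "\<not> (\<exists>\<mu><n. \<xi> \<mu>)"
  then have "filter id (map \<xi> [0..<n]) = []" by (auto simp: filter_empty_conv)
  with \<open>xor_list _\<close> show False by (simp add: xor_list_def)
qed

lemma nth_mem_intro: "i < length xs \<Longrightarrow> xs!i = y \<Longrightarrow> y \<in> set xs" by auto

lemma filt_one: "filter (\<lambda>k. k = \<mu>) [0..<n] = (if \<mu> < n then [\<mu>] else [])"
  by (induction n) auto

lemma xor_one: "\<mu> < n \<Longrightarrow> xor_list (map (\<lambda>k. k = \<mu>) [0..<n])"
proof -
  assume m: "\<mu> < n"
  have "filter id (map (\<lambda>k. k = \<mu>) [0..<n]) = map (\<lambda>k. k = \<mu>) (filter (\<lambda>k. k = \<mu>) [0..<n])"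
    by (simp add: filter_map comp_def)
  moreover have "filter (\<lambda>k. k = \<mu>) [0..<n] = [\<mu>]"
    using m filt_one by simp
  ultimately show ?thesis by (simp add: xor_list_def)
qed

theorem mainTheorem1:
  fixes F :: "'v cnf"
  assumes "length F \<ge> 1"
    and "\<forall>c \<in> set F. length c \<ge> 1"
  shows "cnf_satisfiable F \<longleftrightarrow> gh_satisfiable F"
proof
  assume "cnf_satisfiable F"
  then obtain a where a: "cnf_val a F" by (auto simp: cnf_satisfiable_def)
  have "\<forall>i. \<exists>\<mu>. i < length F \<longrightarrow> \<mu> < length (F!i) \<and> lit_val a (F!i!\<mu>)"
  proof
    fix i
    show "\<exists>\<mu>. i < length F \<longrightarrow> \<mu> < length (F!i) \<and> lit_val a (F!i!\<mu>)"
    proof (cases "i < length F")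
      case True
      then have "F!i \<in> set F" by simp
      with a obtain L where "L \<in> set (F!i)" "lit_val a L" by (auto simp: cnf_val_def)
      then show ?thesis by (metis in_set_conv_nth)
    qed simp
  qed
  then obtain c where c: "\<And>i. i < length F \<Longrightarrow> c i < length (F!i) \<and> lit_val a (F!i!c i)"
    by metis
  define \<xi> where "\<xi> = (\<lambda>i \<mu>. \<mu> = c i)"
  have "g_val F \<xi>" unfolding g_val_def \<xi>_def using c xor_one by blast
  moreover have "h_val F \<xi>"
    unfolding h_val_def
  proof (intro allI impI)
    fix i j assume ij: "i < j \<and> j < length F"
    show "\<forall>((i', \<mu>), (j', \<nu>)) \<in> B F i j. \<not> \<xi> i' \<mu> \<or> \<not> \<xi> j' \<nu>"
    proof (clarsimp simp: B_def \<xi>_def)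
      assume "F ! i ! c i = complement (F ! j ! c j)"
      moreover have "lit_val a (F!i!c i)" "lit_val a (F!j!c j)" using c ij by auto
      ultimately show False by (auto simp: complement_def lit_val_def)
    qed
  qed
  ultimately show "gh_satisfiable F" by (auto simp: gh_satisfiable_def)
next
  assume "gh_satisfiable F"
  then obtain \<xi> where g: "g_val F \<xi>" and h: "h_val F \<xi>" by (auto simp: gh_satisfiable_def)
  define a where "a = (\<lambda>v. \<exists>i<length F. \<exists>\<mu><length (F!i). \<xi> i \<mu> \<and> F!i!\<mu> = (v, True))"
  have "cnf_val a F"
    unfolding cnf_val_def
  proof
    fix cl assume "cl \<in> set F"
    then obtain i where i: "i < length F" "cl = F!i" by (metis in_set_conv_nth)
    from g i obtain \<mu> where m: "\<mu> < length (F!i)" "\<xi> i \<mu>"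
      using xor_ex unfolding g_val_def by blast
    obtain v p where vp: "F!i!\<mu> = (v, p)" by fastforce
    show "\<exists>L\<in>set cl. lit_val a L"
    proof (cases "p")
      case True
      then have "a v" unfolding a_def using i m vp by auto
      then show ?thesis using i m vp True by (intro bexI[of _ "F!i!\<mu>"]) (auto simp: lit_val_def simp del: nth_mem intro: nth_mem_intro)
    next
      case False
      show ?thesis
      proof (cases "a v")
        case False
        then show ?thesis using i m vp \<open>\<not> p\<close> by (intro bexI[of _ "F!i!\<mu>"]) (auto simp: lit_val_def simp del: nth_mem intro: nth_mem_intro)
      next
        case True
        then obtain j \<nu> where j: "j < length F" "\<nu> < length (F!j)" "\<xi> j \<nu>" "F!j!\<nu> = (v, True)"
          unfolding a_def by blast
        show ?thesis
        proof (cases "j = i")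
          case True
          then show ?thesis using i j \<open>a v\<close> by (intro bexI[of _ "F!j!\<nu>"]) (auto simp: lit_val_def simp del: nth_mem intro: nth_mem_intro)
        next
          case ne: False
          show ?thesis
          proof (cases "i < j")
            case True
            have "((i,\<mu>),(j,\<nu>)) \<in> B F i j" unfolding B_def
              using m j vp \<open>\<not> p\<close> by (auto simp: complement_def)
            with h True j m show ?thesis unfolding h_val_def by fastforce
          next
            case False
            with ne have "j < i" by simp
            have "((j,\<nu>),(i,\<mu>)) \<in> B F j i" unfolding B_def
              using m j vp \<open>\<not> p\<close> by (auto simp: complement_def)
            with h \<open>j < i\<close> i m j show ?thesis unfolding h_val_def by fastforce
          qed
        qed
      qed
    qed
  qed
  then show "cnf_satisfiable F" by (auto simp: cnf_satisfiable_def)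
qed

end
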